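(* Consider CAV $i$ subject to both the rear-end constraint with respect to its physically preceding CAV $i_p$ and the safe-merging constraint with respect to CAV $i-1$ on the other road, as in the context, under (A1) and (SA). Let $t=t_i^0+k\Delta t$. Assume $v_i\ge0$ at all times and $u_{\min}\le0$. Suppose that $b_{\eta_1}(t)\ge0$, $b_{\eta_2}(t)\ge0$, that QP$_{12}(t)$ is feasible, and that the control applied on $[t,t+\Delta t)$ is a feasible point of QP$_{12}(t)$. Then QP$_{12}(t+\Delta t)$ is feasible.
   Context: **Vehicle model.** The vehicle dynamics are $\dot x_i=v_i$ and $\dot v_i=u_i$, where $x_i\in[0,L]$ is the distance travelled by CAV $i$ from its road's origin, $v_i$ its speed and $u_i$ its acceleration (the control). The merging point is at position $L>0$. **Other vehicles.** CAV $i_p$ physically precedes $i$ on the same road, with position $x_{i_p}$, speed $v_{i_p}$ and acceleration $u_{i_p}$. CAV $i-1$ immediately precedes $i$ in first-in-first-out crossing order on the other road, with $x_{i-1}$, $v_{i-1}$ and $u_{i-1}$. All of these quantities are known to CAV $i$. **Constants and control bounds.** Let $z_{i,i_p}=x_{i_p}-x_i$ and $z_{i,i-1}=x_{i-1}-x_i$. The constants are $\varphi>0$, $\delta$, $k_1>0$, $k_2>0$, and $\varphi_2=\varphi/L$. Control bounds are $u_{\min}\le u_i\le u_{i,\max}$ with $u_{\min}<0<u_{i,\max}$. **(A1) Common minimum acceleration.** All CAVs share the minimum acceleration $u_{\min}$, so $u_{i_p}\ge u_{\min}$ and $u_{i-1}\ge u_{\min}$ at all times. **Rear-end functions:** - $b_1=z_{i,i_p}-\varphi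 v_i-\delta$. - $b_{\mathrm{cbf}_1}(u_i)=v_{i_p}-v_i-\varphi u_i+k_1b_1$. - $b_{F,1}=v_{i_p}-v_i+k_1b_1-\varphi u_{\min}$. - $b_{\eta_1}=v_{i_p}-v_i-\varphi u_{\min}$. - $\eta_1(u_i)=u_{i_p}-u_i+k_1b_{\eta_1}$. **Merging functions:** - $b_2=z_{i,i-1}-\varphi_2x_iv_i-\delta$. - $b_{\mathrm{cbf}_2}(u_i)=v_{i-1}-v_i-\varphi_2v_i^2-\varphi_2x_iu_i+k_2b_2$. - $b_{F,2}=v_{i-1}-v_i-\varphi_2v_i^2+k_2b_2-\varphi_2x_iu_{\min}$. - $b_{\eta_2}=v_{i-1}-v_i-\varphi_2v_i^2-\varphi_2x_iu_{\min}$. - $\eta_2(u_i)=u_{i-1}-u_i-2\varphi_2v_iu_i-\varphi_2v_iu_{\min}+k_2b_{\eta_2}$. Note that $\eta_j=\dot b_{\eta_j}+k_jb_{\eta_j}$ and $\dot b_{F,j}+k_jb_{F,j}=\eta_j+k_jb_{\mathrm{cbf}_j}$ for $j=1,2$. **QP$_{12}(t)$.** QP$_{12}(t)$ minimizes $\beta e_i^2+\tfrac12(u_i-u_{\mathrm{ref}}(t))^2$ over $(u_i,e_i)$ subject to: - $b_{\mathrm{cbf}_1}\ge0$ and $b_{\mathrm{cbf}_2}\ge0$, - $u_{\min}\le u_i\le u_{i,\max}$, - $\eta_1\ge0$ and $\eta_2\ge0$, - a control Lyapunov constraint $c_1(t)+c_2(t)u_i\le e_i$ with free slack variable $e_i$.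 All quantities are evaluated at $t$. "Feasible" means the constraint set is nonempty. **(SA) Sampling / forward invariance.** The control is held constant on each $[t,t+\Delta t)$, and $\Delta t$ is small enough that for $b\in\{b_1,b_{F,1},b_{\eta_1}\}$ with gain $k=k_1$, and for $b\in\{b_2,b_{F,2},b_{\eta_2}\}$ with gain $k=k_2$: if $b(t)\ge0$ and $\dot b(t)+kb(t)\ge0$ under the applied controls, then $b(t+\Delta t)\ge0$. *)

theory Defs
  imports Complex_Main
begin

text \<open>State variables: xi, vi (ego CAV i), xp, vp, up (physically preceding CAV i_p),
  xm, vm, um (CAV i-1, FIFO predecessor on the other road). phi2 = phi / L.\<close>

definition b1 :: "real \<Rightarrow> real \<Rightarrow> real \<Rightarrow> real \<Rightarrow> real \<Rightarrow> real" where
  "b1 phi delta xi vi xp = (xp - xi) - phi * vi - delta"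

definition bcbf1 :: "real \<Rightarrow> real \<Rightarrow> real \<Rightarrow> real \<Rightarrow> real \<Rightarrow> real \<Rightarrow> real \<Rightarrow> real \<Rightarrow> real" where
  "bcbf1 phi delta k1 xi vi xp vp u = vp - vi - phi * u + k1 * b1 phi delta xi vi xp"

definition bF1 :: "real \<Rightarrow> real \<Rightarrow> real \<Rightarrow> real \<Rightarrow> real \<Rightarrow> real \<Rightarrow> real \<Rightarrow> real \<Rightarrow> real" where
  "bF1 phi delta k1 umin xi vi xp vp = vp - vi + k1 * b1 phi delta xi vi xp - phi * umin"

definition beta1 :: "real \<Rightarrow> real \<Rightarrow> real \<Rightarrow> real \<Rightarrow> real" where
  "beta1 phi umin vi vp = vp - vi - phi * umin"

definition eta1 :: "real \<Rightarrow> real \<Rightarrow> real \<Rightarrow> real \<Rightarrow> real \<Rightarrow> real \<Rightarrow> real \<Rightarrow> real" where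
  "eta1 phi k1 umin vi vp up u = up - u + k1 * beta1 phi umin vi vp"

definition b2 :: "real \<Rightarrow> real \<Rightarrow> real \<Rightarrow> real \<Rightarrow> real \<Rightarrow> real \<Rightarrow> real" where
  "b2 phi delta L xi vi xm = (xm - xi) - (phi / L) * xi * vi - delta"

definition bcbf2 :: "real \<Rightarrow> real \<Rightarrow> real \<Rightarrow> real \<Rightarrow> real \<Rightarrow> real \<Rightarrow> real \<Rightarrow> real \<Rightarrow> real \<Rightarrow> real" where
  "bcbf2 phi delta k2 L xi vi xm vm u =
     vm - vi - (phi / L) * vi ^ 2 - (phi / L) * xi * u + k2 * b2 phi delta L xi vi xm"

definition bF2 :: "real \<Rightarrow> real \<Rightarrow> real \<Rightarrow> real \<Rightarrow> real \<Rightarrow> real \<Rightarrow> real \<Rightarrow> real \<Rightarrow> real \<Rightarrow> real" where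
  "bF2 phi delta k2 L umin xi vi xm vm =
     vm - vi - (phi / L) * vi ^ 2 + k2 * b2 phi delta L xi vi xm - (phi / L) * xi * umin"

definition beta2 :: "real \<Rightarrow> real \<Rightarrow> real \<Rightarrow> real \<Rightarrow> real \<Rightarrow> real \<Rightarrow> real" where
  "beta2 phi L umin xi vi vm = vm - vi - (phi / L) * vi ^ 2 - (phi / L) * xi * umin"

definition eta2 :: "real \<Rightarrow> real \<Rightarrow> real \<Rightarrow> real \<Rightarrow> real \<Rightarrow> real \<Rightarrow> real \<Rightarrow> real \<Rightarrow> real \<Rightarrow> real" where
  "eta2 phi k2 L umin xi vi vm um u =
     um - u - 2 * (phi / L) * vi * u - (phi / L) * vi * umin + k2 * beta2 phi L umin xi vi vm"

text \<open>Constraints of QP12 at a time instant, for the decision variables (u, e), given the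
  current values of all state quantities and of c1, c2. The objective (beta, u_ref) plays no
  role in feasibility.\<close>

definition QP12_constraints ::
  "real \<Rightarrow> real \<Rightarrow> real \<Rightarrow> real \<Rightarrow> real \<Rightarrow> real \<Rightarrow> real \<Rightarrow>
   real \<Rightarrow> real \<Rightarrow> real \<Rightarrow> real \<Rightarrow> real \<Rightarrow> real \<Rightarrow> real \<Rightarrow> real \<Rightarrow>
   real \<Rightarrow> real \<Rightarrow> real \<Rightarrow> real \<Rightarrow> bool" where
  "QP12_constraints phi delta k1 k2 L umin umax xi vi xp vp up xm vm um c1 c2 u e \<longleftrightarrow>
     bcbf1 phi delta k1 xi vi xp vp u \<ge> 0 \<and>
     bcbf2 phi delta k2 L xi vi xm vm u \<ge> 0 \<and>
     umin \<le> u \<and> u \<le> umax \<and>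
     eta1 phi k1 umin vi vp up u \<ge> 0 \<and>
     eta2 phi k2 L umin xi vi vm um u \<ge> 0 \<and>
     c1 + c2 * u \<le> e"

definition QP12_feasible ::
  "real \<Rightarrow> real \<Rightarrow> real \<Rightarrow> real \<Rightarrow> real \<Rightarrow> real \<Rightarrow> real \<Rightarrow>
   real \<Rightarrow> real \<Rightarrow> real \<Rightarrow> real \<Rightarrow> real \<Rightarrow> real \<Rightarrow> real \<Rightarrow> real \<Rightarrow>
   real \<Rightarrow> real \<Rightarrow> bool" where
  "QP12_feasible phi delta k1 k2 L umin umax xi vi xp vp up xm vm um c1 c2 \<longleftrightarrow>
     (\<exists>u e. QP12_constraints phi delta k1 k2 L umin umax xi vi xp vp up xm vm um c1 c2 u e)"

text \<open>If B(t) \<ge> 0 and dB/dt(t) + K B(t) \<ge> 0 (right derivative at t, i.e. under the control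
  applied on [t, t + dt)), then B(t + dt) \<ge> 0.\<close>

definition SA_holds :: "(real \<Rightarrow> real) \<Rightarrow> real \<Rightarrow> real \<Rightarrow> real \<Rightarrow> bool" where
  "SA_holds B K t dt \<longleftrightarrow>
     (\<forall>d. (B has_real_derivative d) (at t within {t..}) \<longrightarrow>
          B t \<ge> 0 \<longrightarrow> d + K * B t \<ge> 0 \<longrightarrow> B (t + dt) \<ge> 0)"

end

theory Submission
  imports Defs
begin

theorem theorem5:
  fixes x v u xp vp up xm vm um c1 c2 :: "real \<Rightarrow> real"
    and phi delta k1 k2 L umin umax t0 dt t :: real
    and k :: nat
  assumes phi: "phi > 0" and k1: "k1 > 0" and k2: "k2 > 0" and L: "L > 0"
    and ubounds: "umin < 0" "0 < umax" and umin_nonpos: "umin \<le> 0"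
    and dt: "dt > 0"
    and t_def: "t = t0 + real k * dt"
    \<comment> \<open>dynamics (right derivatives, since controls are piecewise constant)\<close>
    and dyn_i: "\<And>s. s \<ge> t0 \<Longrightarrow> (x has_real_derivative v s) (at s within {s..})"
               "\<And>s. s \<ge> t0 \<Longrightarrow> (v has_real_derivative u s) (at s within {s..})"
    and dyn_p: "\<And>s. s \<ge> t0 \<Longrightarrow> (xp has_real_derivative vp s) (at s within {s..})"
               "\<And>s. s \<ge> t0 \<Longrightarrow> (vp has_real_derivative up s) (at s within {s..})"
    and dyn_m: "\<And>s. s \<ge> t0 \<Longrightarrow> (xm has_real_derivative vm s) (at s within {s..})"
               "\<And>s. s \<ge> t0 \<Longrightarrow> (vm has_real_derivative um s) (at s within {s..})"
    and x_range: "\<And>s. s \<ge> t0 \<Longrightarrow> 0 \<le> x s \<and> x s \<le> L"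
    and v_nonneg: "\<And>s. s \<ge> t0 \<Longrightarrow> v s \<ge> 0"
    \<comment> \<open>(A1)\<close>
    and A1: "\<And>s. s \<ge> t0 \<Longrightarrow> up s \<ge> umin" "\<And>s. s \<ge> t0 \<Longrightarrow> um s \<ge> umin"
    \<comment> \<open>control held constant on [t, t + dt)\<close>
    and hold: "\<And>s. t \<le> s \<Longrightarrow> s < t + dt \<Longrightarrow> u s = u t"
    \<comment> \<open>(SA)\<close>
    and SA1: "SA_holds (\<lambda>s. b1 phi delta (x s) (v s) (xp s)) k1 t dt"
    and SA2: "SA_holds (\<lambda>s. bF1 phi delta k1 umin (x s) (v s) (xp s) (vp s)) k1 t dt"
    and SA3: "SA_holds (\<lambda>s. beta1 phi umin (v s) (vp s)) k1 t dt"
    and SA4: "SA_holds (\<lambda>s. b2 phi delta L (x s) (v s) (xm s)) k2 t dt"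
    and SA5: "SA_holds (\<lambda>s. bF2 phi delta k2 L umin (x s) (v s) (xm s) (vm s)) k2 t dt"
    and SA6: "SA_holds (\<lambda>s. beta2 phi L umin (x s) (v s) (vm s)) k2 t dt"
    \<comment> \<open>hypotheses at time t\<close>
    and beta1_t: "beta1 phi umin (v t) (vp t) \<ge> 0"
    and beta2_t: "beta2 phi L umin (x t) (v t) (vm t) \<ge> 0"
    and feas_t: "QP12_feasible phi delta k1 k2 L umin umax
                   (x t) (v t) (xp t) (vp t) (up t) (xm t) (vm t) (um t) (c1 t) (c2 t)"
    and applied: "\<exists>e. QP12_constraints phi delta k1 k2 L umin umax
                   (x t) (v t) (xp t) (vp t) (up t) (xm t) (vm t) (um t) (c1 t) (c2 t) (u t) e"
  shows "QP12_feasible phi delta k1 k2 L umin umax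
           (x (t + dt)) (v (t + dt)) (xp (t + dt)) (vp (t + dt)) (up (t + dt))
           (xm (t + dt)) (vm (t + dt)) (um (t + dt)) (c1 (t + dt)) (c2 (t + dt))"
proof -
  have tt0: "t \<ge> t0" using t_def dt by simp
  note dx = dyn_i(1)[OF tt0] and dv = dyn_i(2)[OF tt0] and dxp = dyn_p(1)[OF tt0]
    and dvp = dyn_p(2)[OF tt0] and dxm = dyn_m(1)[OF tt0] and dvm = dyn_m(2)[OF tt0]
  obtain e where ap: "QP12_constraints phi delta k1 k2 L umin umax
                   (x t) (v t) (xp t) (vp t) (up t) (xm t) (vm t) (um t) (c1 t) (c2 t) (u t) e"
    using applied by blast
  have xr: "0 \<le> x t" using x_range[OF tt0] by simp
  have vt: "0 \<le> v t" using v_nonneg[OF tt0] by simp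
  have pL: "phi / L > 0" using phi L by simp
  have c1: "bcbf1 phi delta k1 (x t) (v t) (xp t) (vp t) (u t) \<ge> 0"
   and c2: "bcbf2 phi delta k2 L (x t) (v t) (xm t) (vm t) (u t) \<ge> 0"
   and c3: "umin \<le> u t"
   and c5: "eta1 phi k1 umin (v t) (vp t) (up t) (u t) \<ge> 0"
   and c6: "eta2 phi k2 L umin (x t) (v t) (vm t) (um t) (u t) \<ge> 0"
    using ap unfolding QP12_constraints_def by auto
  have tdt: "t + dt \<ge> t0" using tt0 dt by simp
  have D3: "((\<lambda>s. beta1 phi umin (v s) (vp s)) has_real_derivative (up t - u t)) (at t within {t..})"
    unfolding beta1_def by (auto intro!: derivative_eq_intros dvp dv simp: algebra_simps)
  have B3: "beta1 phi umin (v (t+dt)) (vp (t+dt)) \<ge> 0"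
    using SA3 D3 beta1_t c5 unfolding SA_holds_def eta1_def by (auto simp: algebra_simps)
  have D2: "((\<lambda>s. bF1 phi delta k1 umin (x s) (v s) (xp s) (vp s)) has_real_derivative
     (up t - u t + k1 * (vp t - v t - phi * u t))) (at t within {t..})"
    unfolding bF1_def b1_def
    by (auto intro!: derivative_eq_intros dvp dv dx dxp simp: algebra_simps)
  have B2t: "bF1 phi delta k1 umin (x t) (v t) (xp t) (vp t) \<ge> 0"
  proof -
    have "phi * (u t - umin) \<ge> 0" using phi c3 by simp
    thus ?thesis using c1 unfolding bF1_def bcbf1_def by (simp add: algebra_simps)
  qed
  have E2: "(up t - u t + k1 * (vp t - v t - phi * u t)) + k1 * bF1 phi delta k1 umin (x t) (v t) (xp t) (vp t)
     = eta1 phi k1 umin (v t) (vp t) (up t) (u t) + k1 * bcbf1 phi delta k1 (x t) (v t) (xp t) (vp t) (u t)"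
    unfolding bF1_def eta1_def bcbf1_def beta1_def by (simp add: algebra_simps)
  have "eta1 phi k1 umin (v t) (vp t) (up t) (u t) + k1 * bcbf1 phi delta k1 (x t) (v t) (xp t) (vp t) (u t) \<ge> 0"
    using c5 c1 k1 by simp
  hence B2: "bF1 phi delta k1 umin (x (t+dt)) (v (t+dt)) (xp (t+dt)) (vp (t+dt)) \<ge> 0"
    using SA2 D2 B2t E2 unfolding SA_holds_def by auto
  have D6: "((\<lambda>s. beta2 phi L umin (x s) (v s) (vm s)) has_real_derivative
      (um t - u t - 2 * (phi / L) * v t * u t - (phi / L) * v t * umin)) (at t within {t..})"
    unfolding beta2_def
    by (auto intro!: derivative_eq_intros dvm dv dx simp: algebra_simps power2_eq_square  less_imp_neq[OF L, symmetric])
  have B6: "beta2 phi L umin (x (t+dt)) (v (t+dt)) (vm (t+dt)) \<ge> 0"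
    using SA6 D6 beta2_t c6 unfolding SA_holds_def eta2_def by (auto simp: algebra_simps)
  have D5: "((\<lambda>s. bF2 phi delta k2 L umin (x s) (v s) (xm s) (vm s)) has_real_derivative
      (um t - u t - 2 * (phi / L) * v t * u t
        + k2 * (vm t - v t - (phi / L) * v t * v t - (phi / L) * x t * u t) - (phi / L) * v t * umin)) (at t within {t..})"
    unfolding bF2_def b2_def
    by (auto intro!: derivative_eq_intros dvm dv dx dxm simp: field_simps power2_eq_square  less_imp_neq[OF L, symmetric])
  have B5t: "bF2 phi delta k2 L umin (x t) (v t) (xm t) (vm t) \<ge> 0"
  proof -
    have "(phi / L) * x t * (u t - umin) \<ge> 0" using pL c3 xr by (intro mult_nonneg_nonneg) auto
    moreover have "bF2 phi delta k2 L umin (x t) (v t) (xm t) (vm t) =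
      bcbf2 phi delta k2 L (x t) (v t) (xm t) (vm t) (u t) + (phi / L) * x t * (u t - umin)"
      unfolding bF2_def bcbf2_def by (simp add: right_diff_distrib)
    ultimately show ?thesis using c2 by linarith
  qed
  have E5: "(um t - u t - 2 * (phi / L) * v t * u t
        + k2 * (vm t - v t - (phi / L) * v t * v t - (phi / L) * x t * u t) - (phi / L) * v t * umin)
     + k2 * bF2 phi delta k2 L umin (x t) (v t) (xm t) (vm t)
     = eta2 phi k2 L umin (x t) (v t) (vm t) (um t) (u t) + k2 * bcbf2 phi delta k2 L (x t) (v t) (xm t) (vm t) (u t)"
    unfolding bF2_def eta2_def bcbf2_def beta2_def by (simp add: algebra_simps power2_eq_square)
  have "eta2 phi k2 L umin (x t) (v t) (vm t) (um t) (u t) + k2 * bcbf2 phi delta k2 L (x t) (v t) (xm t) (vm t) (u t) \<ge> 0"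
    using c6 c2 k2 by simp
  hence B5: "bF2 phi delta k2 L umin (x (t+dt)) (v (t+dt)) (xm (t+dt)) (vm (t+dt)) \<ge> 0"
    using SA5 D5 B5t E5 unfolding SA_holds_def by auto
  \<comment> \<open>candidate u = umin\<close>
  have vT: "v (t+dt) \<ge> 0" using v_nonneg[OF tdt] .
  have upT: "up (t+dt) \<ge> umin" using A1(1)[OF tdt] .
  have umT: "um (t+dt) \<ge> umin" using A1(2)[OF tdt] .
  have m: "(phi / L) * v (t+dt) * umin \<le> 0"
    using pL vT umin_nonpos by (intro mult_nonneg_nonpos mult_nonneg_nonneg) auto
  have "QP12_constraints phi delta k1 k2 L umin umax
           (x (t + dt)) (v (t + dt)) (xp (t + dt)) (vp (t + dt)) (up (t + dt))
           (xm (t + dt)) (vm (t + dt)) (um (t + dt)) (c1 (t + dt)) (c2 (t + dt)) umin (c1 (t+dt) + c2 (t+dt) * umin)"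
    unfolding QP12_constraints_def
  proof (intro conjI)
    show "bcbf1 phi delta k1 (x (t+dt)) (v (t+dt)) (xp (t+dt)) (vp (t+dt)) umin \<ge> 0"
      using B2 unfolding bF1_def bcbf1_def by (simp add: algebra_simps)
    show "bcbf2 phi delta k2 L (x (t+dt)) (v (t+dt)) (xm (t+dt)) (vm (t+dt)) umin \<ge> 0"
      using B5 unfolding bF2_def bcbf2_def by (simp add: algebra_simps)
    show "eta1 phi k1 umin (v (t+dt)) (vp (t+dt)) (up (t+dt)) umin \<ge> 0"
      using B3 upT k1 unfolding eta1_def by simp
    show "eta2 phi k2 L umin (x (t+dt)) (v (t+dt)) (vm (t+dt)) (um (t+dt)) umin \<ge> 0"
    proof -
      have "k2 * beta2 phi L umin (x (t+dt)) (v (t+dt)) (vm (t+dt)) \<ge> 0" using B6 k2 by simp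
      moreover have "eta2 phi k2 L umin (x (t+dt)) (v (t+dt)) (vm (t+dt)) (um (t+dt)) umin
        = (um (t+dt) - umin) - 3 * ((phi / L) * v (t+dt) * umin) + k2 * beta2 phi L umin (x (t+dt)) (v (t+dt)) (vm (t+dt))"
        unfolding eta2_def by (simp add: algebra_simps)
      ultimately show ?thesis using umT m by linarith
    qed
  qed (use ubounds in auto)
  thus ?thesis unfolding QP12_feasible_def by blast
qed

end
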